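(* Fix $j\ge1$, $\alpha>0$, $\ell>0$, $p\in\mathbb{N}$. In the modified GPORT with immigration $\mathcal{T}_{\alpha,\ell}$, let $B_{N,m}$ be the number of children of the root $0$ whose subtree has exactly $m$ nodes, after $N$ insertions. Let $(Z_{N,0},\dots,Z_{N,j+1})_{N\ge0}$ be the urn described in the context. Then the processes $\big(B_{N,1},\dots,B_{N,j}\big)_{N\ge0}$ and $\Big(\frac{Z_{N,1}}{(\alpha+1)-1},\frac{Z_{N,2}}{2(\alpha+1)-1},\dots,\frac{Z_{N,j}}{j(\alpha+1)-1}\Big)_{N\ge0}$ have the same law.
   Context: Modified GPORT with immigration $\mathcal{T}_{\alpha,\ell}$ (period $p$): at time $0$ a single root labelled $0$; at time $N$ there are ordinary nodes $1,\dots,N$, root $0$ and $\lfloor N/p\rfloor$ immigrant roots; node $N+1$ attaches to an ordinary node $v$ w.p. $(d(v)+\alpha)/C_N$ and to a root $v$ (root $0$ or immigrant) w.p. $(d(v)+\ell)/C_N$, $d(v)$ the out-degree, $C_N=(1+\alpha)N+(\lfloor N/p\rfloor+1)\ell$; after attaching node $N+1$, if $p\mid(N+1)$ a new isolated immigrant root is added. Urn with colours $0,1,\dots,j+1$ (real amounts): $Z_{0,\cdot}=(\ell,0,\dots,0)$. At draw number $N+1$ ($N\ge0$), colour $i$ is drawn w.p. $Z_{N,i}/\sum_{i'}Z_{N,i'}$. Drawing colour $0$: add $1$ to colour $0$ and $\alpha$ to colour $1$. Drawing colour $m$, $1\le m\le j$: remove $m(\alpha+1)-1$ from colour $m$ and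 add $(m+1)(\alpha+1)-1$ to colour $m+1$. Drawing colour $j+1$: add $1+\alpha$ to colour $j+1$. In addition, if $p\mid(N+1)$, add $\ell$ to colour $j+1$ (regardless of the drawn colour). *)

theory Defs
  imports "HOL-Probability.Probability"
begin

fun traj_law :: "('s \<Rightarrow> 's pmf) \<Rightarrow> 's \<Rightarrow> nat \<Rightarrow> 's list pmf" where
  "traj_law K s 0 = return_pmf [s]"
| "traj_law K s (Suc n) = bind_pmf (traj_law K s n) (\<lambda>xs. map_pmf (\<lambda>t. xs @ [t]) (K (last xs)))"

text \<open>Node labels: the root 0, immigrant roots Imm i (i = 1,2,...), ordinary nodes Ord k (k = 1,2,...).\<close>
datatype node = Root0 | Imm nat | Ord nat

text \<open>A tree after N insertions is the list par of length N, where par ! (k-1) is the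
  parent of ordinary node k. The number of immigrant roots is N div p.\<close>
type_synonym tree = "node list"

definition outdeg :: "tree \<Rightarrow> node \<Rightarrow> real" where
  "outdeg par v = real (card {k \<in> {1..length par}. par ! (k - 1) = v})"

definition tree_step :: "real \<Rightarrow> real \<Rightarrow> nat \<Rightarrow> tree \<Rightarrow> tree pmf" where
  "tree_step \<alpha> l p par =
     (let N = length par;
          C = (1 + \<alpha>) * real N + (real (N div p) + 1) * l;
          cands = Root0 # map Imm [1..<N div p + 1] @ map Ord [1..<N + 1];
          w = (\<lambda>v. (case v of Ord _ \<Rightarrow> outdeg par v + \<alpha> | _ \<Rightarrow> outdeg par v + l) / C)
      in map_pmf (\<lambda>v. par @ [v]) (pmf_of_list (map (\<lambda>v. (v, w v)) cands)))"

definition parent_rel :: "tree \<Rightarrow> (nat \<times> nat) set" where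
  "parent_rel par = {(k, k'). 1 \<le> k \<and> k \<le> length par \<and> par ! (k - 1) = Ord k'}"

definition subtree_size :: "tree \<Rightarrow> nat \<Rightarrow> nat" where
  "subtree_size par c = card {k \<in> {1..length par}. (k, c) \<in> (parent_rel par)\<^sup>*}"

definition B :: "tree \<Rightarrow> nat \<Rightarrow> nat" where
  "B par m = card {c \<in> {1..length par}. par ! (c - 1) = Root0 \<and> subtree_size par c = m}"

definition B_vec :: "nat \<Rightarrow> tree \<Rightarrow> real list" where
  "B_vec j par = map (\<lambda>m. real (B par m)) [1..<j + 1]"

text \<open>State (N, Z): N draws done, Z i the (real) amount of colour i, i = 0..j+1.\<close>
type_synonym urn = "nat \<times> (nat \<Rightarrow> real)"

definition urn_init :: "real \<Rightarrow> urn" where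
  "urn_init l = (0, (\<lambda>_. 0)(0 := l))"

definition urn_update :: "real \<Rightarrow> real \<Rightarrow> nat \<Rightarrow> nat \<Rightarrow> nat \<Rightarrow> (nat \<Rightarrow> real) \<Rightarrow> nat \<Rightarrow> (nat \<Rightarrow> real)" where
  "urn_update \<alpha> l p j N Z i =
     (let Z' = (if i = 0 then Z(0 := Z 0 + 1, 1 := Z 1 + \<alpha>)
                else if i \<le> j then
                  Z(i := Z i - (real i * (\<alpha> + 1) - 1),
                    i + 1 := Z (i + 1) + (real (i + 1) * (\<alpha> + 1) - 1))
                else Z(j + 1 := Z (j + 1) + (1 + \<alpha>)))
      in if p dvd (N + 1) then Z'(j + 1 := Z' (j + 1) + l) else Z')"

definition urn_step :: "real \<Rightarrow> real \<Rightarrow> nat \<Rightarrow> nat \<Rightarrow> urn \<Rightarrow> urn pmf" where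
  "urn_step \<alpha> l p j s =
     (case s of (N, Z) \<Rightarrow>
        map_pmf (\<lambda>i. (N + 1, urn_update \<alpha> l p j N Z i))
          (pmf_of_list (map (\<lambda>i. (i, Z i / (\<Sum>i'\<in>{0..j + 1}. Z i'))) [0..<j + 2])))"

definition Z_vec :: "real \<Rightarrow> nat \<Rightarrow> urn \<Rightarrow> real list" where
  "Z_vec \<alpha> j s = map (\<lambda>m. snd s m / (real m * (\<alpha> + 1) - 1)) [1..<j + 1]"

end

theory Submission
  imports Defs
begin


lemma traj_lump:
  assumes inv0: "P s0"
    and invstep: "\<And>s t. P s \<Longrightarrow> t \<in> set_pmf (K s) \<Longrightarrow> P t"
    and comm: "\<And>s. P s \<Longrightarrow> map_pmf f (K s) = K' (f s)"
  shows "map_pmf (map f) (traj_law K s0 n) = traj_law K' (f s0) n \<and>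
         (\<forall>xs\<in>set_pmf (traj_law K s0 n). xs \<noteq> [] \<and> P (last xs))"
proof (induction n)
  case 0
  then show ?case using inv0 by simp
next
  case (Suc n)
  have IH1: "map_pmf (map f) (traj_law K s0 n) = traj_law K' (f s0) n"
    and IH2: "\<And>xs. xs\<in>set_pmf (traj_law K s0 n) \<Longrightarrow> xs \<noteq> [] \<and> P (last xs)" using Suc by auto
  have "map_pmf (map f) (traj_law K s0 (Suc n)) =
     bind_pmf (traj_law K s0 n) (\<lambda>xs. map_pmf (\<lambda>u. map f xs @ [u]) (map_pmf f (K (last xs))))"
    by (simp add: map_bind_pmf pmf.map_comp o_def)
  also have "\<dots> = bind_pmf (traj_law K s0 n) (\<lambda>xs. map_pmf (\<lambda>u. map f xs @ [u]) (K' (last (map f xs))))"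
    by (intro bind_pmf_cong refl) (use IH2 comm in \<open>auto simp: last_map\<close>)
  also have "\<dots> = traj_law K' (f s0) (Suc n)"
    by (simp add: IH1[symmetric] bind_map_pmf)
  finally have 1: "map_pmf (map f) (traj_law K s0 (Suc n)) = traj_law K' (f s0) (Suc n)" .
  have 2: "\<forall>xs\<in>set_pmf (traj_law K s0 (Suc n)). xs \<noteq> [] \<and> P (last xs)"
    using IH2 invstep by auto
  show ?case using 1 2 by blast
qed

lemma pmf_map_pmf_of_list:
  assumes "distinct xs" "pmf_of_list_wf (map (\<lambda>v. (v, w v)) xs)"
  shows "pmf (map_pmf g (pmf_of_list (map (\<lambda>v. (v, w v)) xs))) i = (\<Sum>v\<in>{v\<in>set xs. g v = i}. w v)"
proof -
  have "pmf (map_pmf g (pmf_of_list (map (\<lambda>v. (v, w v)) xs))) i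
      = measure (pmf_of_list (map (\<lambda>v. (v, w v)) xs)) (g -` {i})"
    by (simp add: pmf_map)
  also have "\<dots> = sum_list (map w (filter (\<lambda>v. g v = i) xs))"
    using assms(2) by (simp add: measure_pmf_of_list filter_map o_def)
  also have "\<dots> = (\<Sum>v\<in>{v\<in>set xs. g v = i}. w v)"
    using assms(1) by (simp add: sum_list_distinct_conv_sum_set)
  finally show ?thesis .
qed



definition valid :: "nat \<Rightarrow> tree \<Rightarrow> bool" where
  "valid p par \<longleftrightarrow> (\<forall>k\<in>{1..length par}. case par ! (k - 1) of Root0 \<Rightarrow> True
      | Imm i \<Rightarrow> 1 \<le> i \<and> i \<le> (k - 1) div p | Ord k' \<Rightarrow> 1 \<le> k' \<and> k' < k)"

definition cands :: "nat \<Rightarrow> nat \<Rightarrow> node list" where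
  "cands p N = Root0 # map Imm [1..<N div p + 1] @ map Ord [1..<N + 1]"

lemma set_cands: "set (cands p N) = {Root0} \<union> Imm ` {1..N div p} \<union> Ord ` {1..N}"
  by (auto simp: cands_def)

lemma distinct_cands: "distinct (cands p N)"
  by (auto simp: cands_def distinct_map inj_on_def)

lemma valid_append:
  assumes "valid p par" "v \<in> set (cands p (length par))"
  shows "valid p (par @ [v])"
  unfolding valid_def
proof
  fix k assume k: "k \<in> {1..length (par @ [v])}"
  show "case (par @ [v]) ! (k - 1) of Root0 \<Rightarrow> True
      | Imm i \<Rightarrow> 1 \<le> i \<and> i \<le> (k - 1) div p | Ord k' \<Rightarrow> 1 \<le> k' \<and> k' < k"
  proof (cases "k \<le> length par")
    case True
    then have "k - 1 < length par" using k by auto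
    then have "(par @ [v]) ! (k - 1) = par ! (k - 1)" by (simp add: nth_append)
    then show ?thesis using assms(1) True k unfolding valid_def by auto
  next
    case False
    then have kk: "k = Suc (length par)" using k by auto
    then have "(par @ [v]) ! (k - 1) = v" by (simp add: nth_append)
    then show ?thesis using assms(2) kk unfolding set_cands by auto
  qed
qed

lemma valid_par:
  assumes "valid p par" "k \<in> {1..length par}"
  shows "par ! (k - 1) \<in> set (cands p (length par))"
proof -
  have "(k - 1) div p \<le> length par div p" by (intro div_le_mono) (use assms(2) in auto)
  then show ?thesis
  proof (cases "par ! (k - 1)")
    case (Imm i)
    then show ?thesis using assms \<open>(k - 1) div p \<le> length par div p\<close> unfolding valid_def set_cands by force
  next
    case (Ord i)
    then show ?thesis using assms unfolding valid_def set_cands by force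
  qed (simp add: cands_def)
qed

lemma outdeg_append: "outdeg (par @ [v]) u = outdeg par u + (if v = u then 1 else 0)"
proof -
  have "{k \<in> {1..length (par @ [v])}. (par @ [v]) ! (k - 1) = u}
      = {k \<in> {1..length par}. par ! (k - 1) = u} \<union> (if v = u then {Suc (length par)} else {})"
    by (auto simp: nth_append le_Suc_eq)
  then show ?thesis unfolding outdeg_def by (simp add: card_insert_if)
qed

lemma card_fibres:
  assumes "finite A" "finite V" "\<And>a. a \<in> A \<Longrightarrow> g a \<in> V"
  shows "(\<Sum>v\<in>V. card {a\<in>A. g a = v}) = card A"
proof -
  have "card A = card (\<Union>v\<in>V. {a\<in>A. g a = v})"
    using assms by (intro arg_cong[where f=card]) auto
  also have "\<dots> = (\<Sum>v\<in>V. card {a\<in>A. g a = v})"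
    using assms by (subst card_UN_disjoint) auto
  finally show ?thesis by simp
qed

lemma outdeg_sum:
  assumes "valid p par"
  shows "(\<Sum>v\<in>set (cands p (length par)). outdeg par v) = real (length par)"
proof -
  have "(\<Sum>v\<in>set (cands p (length par)). card {k \<in> {1..length par}. par ! (k - 1) = v}) = card {1..length par}"
    using valid_par[OF assms] by (intro card_fibres) auto
  then show ?thesis unfolding outdeg_def by (metis card_atLeastAtMost diff_Suc_1 of_nat_sum)
qed



definition S :: "tree \<Rightarrow> nat \<Rightarrow> nat set" where
  "S par c = {k \<in> {1..length par}. (k, c) \<in> (parent_rel par)\<^sup>*}"

definition rcs :: "tree \<Rightarrow> nat set" where
  "rcs par = {c \<in> {1..length par}. par ! (c - 1) = Root0}"

lemma subtree_size_S: "subtree_size par c = card (S par c)"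
  by (simp add: subtree_size_def S_def)

lemma finite_S[simp]: "finite (S par c)" by (simp add: S_def)
lemma finite_rcs[simp]: "finite (rcs par)" by (simp add: rcs_def)

lemma B_rcs: "B par m = card {c \<in> rcs par. subtree_size par c = m}"
  unfolding B_def rcs_def by (intro arg_cong[where f=card]) auto

lemma R_bound:
  assumes "valid p par" "(a, b) \<in> parent_rel par"
  shows "1 \<le> a \<and> a \<le> length par \<and> 1 \<le> b \<and> b < a"
proof -
  have a: "a \<in> {1..length par}" "par ! (a - 1) = Ord b" using assms(2) by (auto simp: parent_rel_def)
  have "case par ! (a - 1) of Root0 \<Rightarrow> True
      | Imm i \<Rightarrow> 1 \<le> i \<and> i \<le> (a - 1) div p | Ord k' \<Rightarrow> 1 \<le> k' \<and> k' < a"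
    using assms(1) a(1) unfolding valid_def by (rule bspec)
  then show ?thesis using a by simp
qed

lemma R_sv: "single_valued (parent_rel par)"
  unfolding single_valued_def parent_rel_def by auto

lemma rt_le:
  assumes "valid p par" "(a, b) \<in> (parent_rel par)\<^sup>*"
  shows "b \<le> a"
  using assms(2)
proof (induction rule: rtrancl_induct)
  case (step y z)
  then show ?case using R_bound[OF assms(1) step(2)] by simp
qed simp

lemma rt_out:
  assumes "valid p par" "(a, b) \<in> (parent_rel par)\<^sup>*" "a > length par"
  shows "b = a"
  using assms(2)
proof (rule converse_rtranclE)
  fix y assume "(a, y) \<in> parent_rel par"
  then show "b = a" using R_bound[OF assms(1)] assms(3) by fastforce
qed simp

lemma rc_top:
  assumes "c \<in> rcs par" "(c, y) \<in> (parent_rel par)\<^sup>*"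
  shows "y = c"
  using assms(2)
proof (rule converse_rtranclE)
  fix z assume "(c, z) \<in> parent_rel par"
  then show "y = c" using assms(1) by (simp add: rcs_def parent_rel_def)
qed simp

lemma rc_unique:
  assumes "c1 \<in> rcs par" "c2 \<in> rcs par" "(k, c1) \<in> (parent_rel par)\<^sup>*" "(k, c2) \<in> (parent_rel par)\<^sup>*"
  shows "c1 = c2"
proof -
  have "(c1, c2) \<in> (parent_rel par)\<^sup>* \<or> (c2, c1) \<in> (parent_rel par)\<^sup>*"
    by (rule single_valued_confluent[OF R_sv assms(3,4)])
  then show ?thesis
  proof
    assume "(c1, c2) \<in> (parent_rel par)\<^sup>*"
    from rc_top[OF assms(1) this] show ?thesis by simp
  next
    assume "(c2, c1) \<in> (parent_rel par)\<^sup>*"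
    from rc_top[OF assms(2) this] show ?thesis by simp
  qed
qed

lemma S_rc: "c \<in> rcs par \<Longrightarrow> c \<in> S par c"
  by (auto simp: rcs_def S_def)

lemma outdeg_subtree:
  assumes "valid p par" "c \<in> rcs par"
  shows "(\<Sum>k\<in>S par c. outdeg par (Ord k)) = real (card (S par c)) - 1"
proof -
  let ?R = "parent_rel par"
  have eq: "(\<Union>k\<in>S par c. {k' \<in> {1..length par}. par ! (k' - 1) = Ord k}) = S par c - {c}"
  proof (intro equalityI subsetI)
    fix x assume "x \<in> (\<Union>k\<in>S par c. {k' \<in> {1..length par}. par ! (k' - 1) = Ord k})"
    then obtain k where k: "k \<in> S par c" "x \<in> {1..length par}" "par ! (x - 1) = Ord k" by auto
    then have "(x, k) \<in> ?R" by (auto simp: parent_rel_def)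
    moreover have "(k, c) \<in> ?R\<^sup>*" using k by (auto simp: S_def)
    ultimately have "(x, c) \<in> ?R\<^sup>*" by (rule converse_rtrancl_into_rtrancl)
    moreover have "x \<noteq> c" using k assms(2) by (auto simp: rcs_def)
    ultimately show "x \<in> S par c - {c}" using k by (auto simp: S_def)
  next
    fix x assume x: "x \<in> S par c - {c}"
    then have "(x, c) \<in> ?R\<^sup>*" "x \<noteq> c" "x \<in> {1..length par}" by (auto simp: S_def)
    then obtain y where y: "(x, y) \<in> ?R" "(y, c) \<in> ?R\<^sup>*"
      by (metis converse_rtranclE)
    have "y \<in> {1..length par}" using R_bound[OF assms(1) y(1)] by auto
    then have "y \<in> S par c" using y by (auto simp: S_def)
    moreover have "par ! (x - 1) = Ord y" using y(1) by (auto simp: parent_rel_def)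
    ultimately show "x \<in> (\<Union>k\<in>S par c. {k' \<in> {1..length par}. par ! (k' - 1) = Ord k})"
      using \<open>x \<in> {1..length par}\<close> by auto
  qed
  have "(\<Sum>k\<in>S par c. card {k' \<in> {1..length par}. par ! (k' - 1) = Ord k})
      = card (\<Union>k\<in>S par c. {k' \<in> {1..length par}. par ! (k' - 1) = Ord k})"
    by (subst card_UN_disjoint) auto
  also have "\<dots> = card (S par c) - 1" using eq S_rc[OF assms(2)] by simp
  finally have "(\<Sum>k\<in>S par c. outdeg par (Ord k)) = real (card (S par c) - 1)"
    unfolding outdeg_def by (metis of_nat_sum)
  moreover have "card (S par c) \<ge> 1" using S_rc[OF assms(2)]
    by (metis One_nat_def card_0_eq empty_iff finite_S less_one not_less)
  ultimately show ?thesis by simp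
qed



definition cls :: "nat \<Rightarrow> tree \<Rightarrow> node \<Rightarrow> nat" where
  "cls j par v = (case v of Root0 \<Rightarrow> 0 | Imm _ \<Rightarrow> Suc j
     | Ord k \<Rightarrow> (if \<exists>c\<in>rcs par. (k, c) \<in> (parent_rel par)\<^sup>* \<and> subtree_size par c \<le> j
                 then subtree_size par (THE c. c \<in> rcs par \<and> (k, c) \<in> (parent_rel par)\<^sup>*)
                 else Suc j))"

lemma the_rc:
  assumes "c \<in> rcs par" "(k, c) \<in> (parent_rel par)\<^sup>*"
  shows "(THE c. c \<in> rcs par \<and> (k, c) \<in> (parent_rel par)\<^sup>*) = c"
  using assms by (intro the_equality) (auto intro: rc_unique)

lemma cls_Ord_in:
  assumes "c \<in> rcs par" "(k, c) \<in> (parent_rel par)\<^sup>*"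
  shows "cls j par (Ord k) = (if subtree_size par c \<le> j then subtree_size par c else Suc j)"
proof (cases "subtree_size par c \<le> j")
  case True
  then show ?thesis using assms by (auto simp: cls_def the_rc)
next
  case False
  have "\<not> (\<exists>c'\<in>rcs par. (k, c') \<in> (parent_rel par)\<^sup>* \<and> subtree_size par c' \<le> j)"
    using False assms rc_unique by blast
  then show ?thesis using False by (auto simp: cls_def)
qed

lemma cls_Ord_none:
  assumes "\<not> (\<exists>c\<in>rcs par. (k, c) \<in> (parent_rel par)\<^sup>*)"
  shows "cls j par (Ord k) = Suc j"
  using assms by (auto simp: cls_def)

lemma size_pos: "c \<in> rcs par \<Longrightarrow> subtree_size par c \<ge> 1"
  unfolding subtree_size_S using S_rc[of c par]
  by (metis One_nat_def card_0_eq empty_iff finite_S less_one not_less)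

lemma cls_le: "cls j par v \<le> Suc j"
proof (cases v)
  case (Ord k)
  then show ?thesis
    by (cases "\<exists>c\<in>rcs par. (k, c) \<in> (parent_rel par)\<^sup>*") (auto simp: cls_Ord_in cls_Ord_none)
qed (auto simp: cls_def)

lemma cls_Ord_pos: "cls j par (Ord k) \<ge> 1"
proof (cases "\<exists>c\<in>rcs par. (k, c) \<in> (parent_rel par)\<^sup>*")
  case True
  then obtain c where c: "c \<in> rcs par" "(k, c) \<in> (parent_rel par)\<^sup>*" by blast
  show ?thesis using cls_Ord_in[OF c, of j] size_pos[OF c(1)] by simp
qed (simp add: cls_Ord_none)

lemma S_sub: "S par c \<subseteq> {1..length par}" by (auto simp: S_def)

lemma class_set:
  assumes "1 \<le> i" "i \<le> j"
  shows "{v \<in> set (cands p (length par)). cls j par v = i}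
       = Ord ` (\<Union>c\<in>{c \<in> rcs par. subtree_size par c = i}. S par c)"
proof (intro equalityI subsetI)
  fix v assume v: "v \<in> {v \<in> set (cands p (length par)). cls j par v = i}"
  then obtain k where k: "v = Ord k" "k \<in> {1..length par}" using assms
    unfolding set_cands by (auto simp: cls_def)
  have ci: "cls j par (Ord k) = i" using v k by simp
  then obtain c where c: "c \<in> rcs par" "(k, c) \<in> (parent_rel par)\<^sup>*"
    using cls_Ord_none[where k=k and par=par and j=j] assms by (cases "\<exists>c\<in>rcs par. (k, c) \<in> (parent_rel par)\<^sup>*") auto
  then have "subtree_size par c = i" using ci assms cls_Ord_in[OF c, of j] by (auto split: if_splits)
  moreover have "k \<in> S par c" using k c by (auto simp: S_def)
  ultimately show "v \<in> Ord ` (\<Union>c\<in>{c \<in> rcs par. subtree_size par c = i}. S par c)"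
    using c k by blast
next
  fix v assume "v \<in> Ord ` (\<Union>c\<in>{c \<in> rcs par. subtree_size par c = i}. S par c)"
  then obtain c k where ck: "v = Ord k" "c \<in> rcs par" "subtree_size par c = i" "k \<in> S par c" by blast
  then have "(k, c) \<in> (parent_rel par)\<^sup>*" "k \<in> {1..length par}" by (auto simp: S_def)
  then show "v \<in> {v \<in> set (cands p (length par)). cls j par v = i}"
    using ck assms cls_Ord_in[OF ck(2), of k j] unfolding set_cands by auto
qed

lemma class0_set: "{v \<in> set (cands p (length par)). cls j par v = 0} = {Root0}"
proof (intro equalityI subsetI)
  fix v assume v: "v \<in> {v \<in> set (cands p (length par)). cls j par v = 0}"
  show "v \<in> {Root0}"
  proof (cases v)
    case (Imm i) then show ?thesis using v by (simp add: cls_def)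
  next
    case (Ord k) then show ?thesis using v cls_Ord_pos[of j par k] by simp
  qed simp
qed (simp add: cls_def set_cands)

definition wn :: "real \<Rightarrow> real \<Rightarrow> tree \<Rightarrow> node \<Rightarrow> real" where
  "wn \<alpha> l par v = outdeg par v + (case v of Ord _ \<Rightarrow> \<alpha> | _ \<Rightarrow> l)"

definition Ctot :: "real \<Rightarrow> real \<Rightarrow> nat \<Rightarrow> nat \<Rightarrow> real" where
  "Ctot \<alpha> l p N = (1 + \<alpha>) * real N + (real (N div p) + 1) * l"

definition Zf :: "real \<Rightarrow> real \<Rightarrow> nat \<Rightarrow> nat \<Rightarrow> tree \<Rightarrow> nat \<Rightarrow> real" where
  "Zf \<alpha> l p j par i = (if i = 0 then outdeg par Root0 + l
     else if i \<le> j then (real i * (\<alpha> + 1) - 1) * real (B par i)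
     else if i = Suc j then Ctot \<alpha> l p (length par) - (outdeg par Root0 + l)
        - (\<Sum>m=1..j. (real m * (\<alpha> + 1) - 1) * real (B par m))
     else 0)"

lemma class_weight_mid:
  assumes "valid p par" "1 \<le> i" "i \<le> j"
  shows "(\<Sum>v\<in>{v \<in> set (cands p (length par)). cls j par v = i}. wn \<alpha> l par v)
       = (real i * (\<alpha> + 1) - 1) * real (B par i)"
proof -
  let ?RC = "{c \<in> rcs par. subtree_size par c = i}"
  have "(\<Sum>v\<in>{v \<in> set (cands p (length par)). cls j par v = i}. wn \<alpha> l par v)
      = (\<Sum>k\<in>(\<Union>c\<in>?RC. S par c). outdeg par (Ord k) + \<alpha>)"
    unfolding class_set[OF assms(2,3)] by (subst sum.reindex) (auto simp: inj_on_def wn_def)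
  also have "\<dots> = (\<Sum>c\<in>?RC. \<Sum>k\<in>S par c. outdeg par (Ord k) + \<alpha>)"
  proof (rule sum.UNION_disjoint)
    show "\<forall>c\<in>?RC. \<forall>c'\<in>?RC. c \<noteq> c' \<longrightarrow> S par c \<inter> S par c' = {}"
      using rc_unique by (fastforce simp: S_def)
  qed auto
  also have "\<dots> = (\<Sum>c\<in>?RC. real i * (\<alpha> + 1) - 1)"
  proof (rule sum.cong)
    fix c assume c: "c \<in> ?RC"
    have "(\<Sum>k\<in>S par c. outdeg par (Ord k) + \<alpha>) = (real (card (S par c)) - 1) + real (card (S par c)) * \<alpha>"
      using outdeg_subtree[OF assms(1)] c by (simp add: sum.distrib)
    also have "\<dots> = real i * (\<alpha> + 1) - 1" using c by (simp add: subtree_size_S algebra_simps)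
    finally show "(\<Sum>k\<in>S par c. outdeg par (Ord k) + \<alpha>) = real i * (\<alpha> + 1) - 1" .
  qed simp
  also have "\<dots> = (real i * (\<alpha> + 1) - 1) * real (B par i)"
    by (simp add: B_rcs)
  finally show ?thesis .
qed

lemma total_weight:
  assumes "valid p par"
  shows "(\<Sum>v\<in>set (cands p (length par)). wn \<alpha> l par v) = Ctot \<alpha> l p (length par)"
proof -
  have "(\<Sum>v\<in>set (cands p (length par)). (case v of Ord _ \<Rightarrow> \<alpha> | _ \<Rightarrow> l))
      = sum_list (map (\<lambda>v. case v of Ord _ \<Rightarrow> \<alpha> | _ \<Rightarrow> l) (cands p (length par)))"
    by (simp add: sum_list_distinct_conv_sum_set distinct_cands)
  also have "\<dots> = l + real (length par div p) * l + real (length par) * \<alpha>"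
    by (simp add: cands_def o_def sum_list_triv del: upt_Suc)
  finally show ?thesis
    using outdeg_sum[OF assms] by (simp add: wn_def sum.distrib Ctot_def algebra_simps)
qed

lemma class_weight:
  assumes "valid p par" "i \<le> Suc j"
  shows "(\<Sum>v\<in>{v \<in> set (cands p (length par)). cls j par v = i}. wn \<alpha> l par v) = Zf \<alpha> l p j par i"
proof -
  let ?F = "\<lambda>i. (\<Sum>v\<in>{v \<in> set (cands p (length par)). cls j par v = i}. wn \<alpha> l par v)"
  have F0: "?F 0 = Zf \<alpha> l p j par 0" by (simp add: class0_set Zf_def wn_def)
  have Fm: "?F i = Zf \<alpha> l p j par i" if "1 \<le> i" "i \<le> j" for i
    using class_weight_mid[OF assms(1) that] that by (simp add: Zf_def)
  have "(\<Sum>i\<in>{0..Suc j}. ?F i) = (\<Sum>v\<in>set (cands p (length par)). wn \<alpha> l par v)"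
    by (rule sum.group) (auto simp: cls_le)
  also have "\<dots> = Ctot \<alpha> l p (length par)" by (rule total_weight[OF assms(1)])
  finally have tot: "(\<Sum>i\<in>{0..Suc j}. ?F i) = Ctot \<alpha> l p (length par)" .
  have "(\<Sum>i\<in>{0..Suc j}. ?F i) = ?F (Suc j) + ?F 0 + (\<Sum>i\<in>{1..j}. ?F i)"
  proof -
    have "{0..Suc j} = insert (Suc j) (insert 0 {1..j})" by auto
    then show ?thesis by simp
  qed
  also have "(\<Sum>i\<in>{1..j}. ?F i) = (\<Sum>m=1..j. (real m * (\<alpha> + 1) - 1) * real (B par m))"
    by (rule sum.cong) (auto simp: Fm Zf_def)
  finally have "?F (Suc j) = Zf \<alpha> l p j par (Suc j)"
    using tot F0 by (simp add: Zf_def)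
  then show ?thesis using assms(2) F0 Fm
    by (cases "i = 0"; cases "i = Suc j") auto
qed



lemma parent_rel_append:
  "parent_rel (par @ [v]) = parent_rel par \<union> {(Suc (length par), k) | k. v = Ord k}"
  unfolding parent_rel_def by (auto simp: nth_append le_Suc_eq split: if_splits)

lemma rtrancl_append:
  assumes "valid p par"
  shows "(parent_rel (par @ [v]))\<^sup>* = (parent_rel par)\<^sup>* \<union>
           {(Suc (length par), y) | y. \<exists>k. v = Ord k \<and> (k, y) \<in> (parent_rel par)\<^sup>*}"
proof (cases "\<exists>k. v = Ord k")
  case True
  then obtain k where k: "v = Ord k" by blast
  have into: "(x, Suc (length par)) \<in> (parent_rel par)\<^sup>* \<longleftrightarrow> x = Suc (length par)" for x
  proof
    assume h: "(x, Suc (length par)) \<in> (parent_rel par)\<^sup>*"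
    have "Suc (length par) \<le> x" by (rule rt_le[OF assms h])
    then show "x = Suc (length par)" using rt_out[OF assms h] by simp
  qed simp
  have "parent_rel (par @ [v]) = insert (Suc (length par), k) (parent_rel par)"
    unfolding parent_rel_append k by auto
  then have "(parent_rel (par @ [v]))\<^sup>* = (parent_rel par)\<^sup>* \<union>
     {(x, y). (x, Suc (length par)) \<in> (parent_rel par)\<^sup>* \<and> (k, y) \<in> (parent_rel par)\<^sup>*}"
    by (simp add: rtrancl_insert)
  then show ?thesis using into k by auto
next
  case False
  then have "parent_rel (par @ [v]) = parent_rel par" unfolding parent_rel_append by auto
  then show ?thesis using False by auto
qed

definition anc :: "tree \<Rightarrow> node \<Rightarrow> nat \<Rightarrow> bool" where
  "anc par v c \<longleftrightarrow> (\<exists>k. v = Ord k \<and> (k, c) \<in> (parent_rel par)\<^sup>*)"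

lemma S_append_old:
  assumes "valid p par" "c \<in> {1..length par}"
  shows "S (par @ [v]) c = S par c \<union> (if anc par v c then {Suc (length par)} else {})"
proof -
  have nN: "(Suc (length par), c) \<notin> (parent_rel par)\<^sup>*"
    using rt_out[OF assms(1), of "Suc (length par)" c] assms(2) by auto
  show ?thesis
    unfolding S_def rtrancl_append[OF assms(1)] anc_def using nN
    by (auto simp: le_Suc_eq)
qed

lemma S_append_new:
  assumes "valid p par"
  shows "S (par @ [v]) (Suc (length par)) = {Suc (length par)}"
proof -
  have h: "(x, Suc (length par)) \<in> (parent_rel par)\<^sup>* \<Longrightarrow> Suc (length par) \<le> x" for x
    using rt_le[OF assms, of x "Suc (length par)"] by simp
  show ?thesis unfolding S_def rtrancl_append[OF assms]
    by (auto dest: h)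
qed

lemma rcs_append:
  "rcs (par @ [v]) = rcs par \<union> (if v = Root0 then {Suc (length par)} else {})"
  unfolding rcs_def by (auto simp: nth_append le_Suc_eq)

lemma size_append_old:
  assumes "valid p par" "c \<in> rcs par"
  shows "subtree_size (par @ [v]) c = subtree_size par c + (if anc par v c then 1 else 0)"
proof -
  have c: "c \<in> {1..length par}" using assms(2) by (simp add: rcs_def)
  have "Suc (length par) \<notin> S par c" by (auto simp: S_def)
  then show ?thesis unfolding subtree_size_S S_append_old[OF assms(1) c] by simp
qed

lemma size_append_new:
  assumes "valid p par"
  shows "subtree_size (par @ [v]) (Suc (length par)) = 1"
  unfolding subtree_size_S S_append_new[OF assms] by simp

lemma card_shift:
  assumes "finite A" "c0 \<in> A" "\<And>c. c \<in> A \<Longrightarrow> c \<noteq> c0 \<Longrightarrow> f' c = f c" "f' c0 = Suc (f c0)"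
  shows "real (card {c \<in> A. f' c = m}) = real (card {c \<in> A. f c = m})
           - (if f c0 = m then 1 else 0) + (if Suc (f c0) = m then 1 else 0)"
proof -
  have split: "{c \<in> A. g c = m} = {c \<in> A - {c0}. g c = m} \<union> (if g c0 = m then {c0} else {})" for g
    using assms(2) by auto
  have card: "card {c \<in> A. g c = m} = card {c \<in> A - {c0}. g c = m} + (if g c0 = m then 1 else 0)" for g
    unfolding split[of g] using assms(1) by (auto simp: card_insert_if)
  have same: "{c \<in> A - {c0}. f' c = m} = {c \<in> A - {c0}. f c = m}" using assms(3) by auto
  show ?thesis using card[of f'] card[of f] same assms(4) by auto
qed



lemma B_append_root:
  assumes "valid p par"
  shows "real (B (par @ [Root0]) i) = real (B par i) + (if i = 1 then 1 else 0)"
proof -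
  let ?N = "Suc (length par)"
  have notin: "?N \<notin> rcs par" by (auto simp: rcs_def)
  have sz: "c \<in> rcs par \<Longrightarrow> subtree_size (par @ [Root0]) c = subtree_size par c" for c
    using size_append_old[OF assms, of c Root0] by (simp add: anc_def)
  have "{c \<in> rcs (par @ [Root0]). subtree_size (par @ [Root0]) c = i}
      = {c \<in> rcs par. subtree_size par c = i} \<union> (if i = 1 then {?N} else {})"
    unfolding rcs_append using sz size_append_new[OF assms, of Root0] by auto
  then show ?thesis unfolding B_rcs using notin by (auto simp: card_insert_if)
qed

lemma B_append_same:
  assumes "valid p par" "v \<noteq> Root0" "\<not> (\<exists>c\<in>rcs par. anc par v c)"
  shows "B (par @ [v]) i = B par i"
proof -
  have sz: "c \<in> rcs par \<Longrightarrow> subtree_size (par @ [v]) c = subtree_size par c" for c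
    using size_append_old[OF assms(1), of c v] assms(3) by auto
  have "{c \<in> rcs (par @ [v]). subtree_size (par @ [v]) c = i}
      = {c \<in> rcs par. subtree_size par c = i}"
    unfolding rcs_append using sz assms(2) by auto
  then show ?thesis unfolding B_rcs by simp
qed

lemma B_append_shift:
  assumes "valid p par" "c0 \<in> rcs par" "anc par v c0"
  shows "real (B (par @ [v]) i) = real (B par i) - (if subtree_size par c0 = i then 1 else 0)
            + (if Suc (subtree_size par c0) = i then 1 else 0)"
proof -
  obtain k where k: "v = Ord k" "(k, c0) \<in> (parent_rel par)\<^sup>*" using assms(3) by (auto simp: anc_def)
  have rcs': "rcs (par @ [v]) = rcs par" unfolding rcs_append using k by simp
  have other: "subtree_size (par @ [v]) c = subtree_size par c" if "c \<in> rcs par" "c \<noteq> c0" for c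
  proof -
    have "\<not> anc par v c" using that rc_unique[OF assms(2) that(1) k(2)] k by (auto simp: anc_def)
    then show ?thesis using size_append_old[OF assms(1) that(1)] by simp
  qed
  have c0: "subtree_size (par @ [v]) c0 = Suc (subtree_size par c0)"
    using size_append_old[OF assms(1,2)] assms(3) by simp
  show ?thesis unfolding B_rcs rcs'
    by (rule card_shift[where f'="subtree_size (par @ [v])" and f="subtree_size par", OF finite_rcs assms(2) other c0])
qed

definition dlt :: "real \<Rightarrow> nat \<Rightarrow> nat \<Rightarrow> nat \<Rightarrow> real" where
  "dlt \<alpha> j c i = (if c = 0 then (if i = 0 then 1 else 0) + (if i = 1 then \<alpha> else 0)
     else if c \<le> j then (if i = Suc c then real (Suc c) * (\<alpha> + 1) - 1 else 0)
                        - (if i = c then real c * (\<alpha> + 1) - 1 else 0)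
     else (if i = Suc j then 1 + \<alpha> else 0))"

lemma urn_update_eq:
  assumes "c \<le> Suc j" "1 \<le> j"
  shows "urn_update \<alpha> l p j N Z c i = Z i + dlt \<alpha> j c i + (if i = Suc j \<and> p dvd Suc N then l else 0)"
  using assms unfolding urn_update_def dlt_def Let_def
  by (auto simp: algebra_simps)

lemma sum_dlt:
  assumes "c \<le> Suc j" "1 \<le> j"
  shows "(\<Sum>i\<in>{0..Suc j}. dlt \<alpha> j c i) = 1 + \<alpha>"
proof -
  consider "c = 0" | "1 \<le> c" "c \<le> j" | "c = Suc j" using assms by linarith
  then show ?thesis
  proof cases
    case 1
    then have "(\<Sum>i\<in>{0..Suc j}. dlt \<alpha> j c i) = (\<Sum>i\<in>{0..Suc j}. (if i = 0 then 1 else 0) + (if i = 1 then \<alpha> else 0))"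
      by (simp add: dlt_def)
    also have "\<dots> = 1 + \<alpha>" using assms by (simp add: sum.distrib)
    finally show ?thesis .
  next
    case 2
    then have "(\<Sum>i\<in>{0..Suc j}. dlt \<alpha> j c i) = (\<Sum>i\<in>{0..Suc j}. (if i = Suc c then real (Suc c) * (\<alpha> + 1) - 1 else 0)
                        - (if i = c then real c * (\<alpha> + 1) - 1 else 0))"
      by (simp add: dlt_def)
    also have "\<dots> = 1 + \<alpha>" using 2 by (simp add: sum_subtractf algebra_simps)
    finally show ?thesis .
  next
    case 3
    then show ?thesis by (simp add: dlt_def)
  qed
qed

lemma Zf_sum: "(\<Sum>i\<in>{0..Suc j}. Zf \<alpha> l p j par i) = Ctot \<alpha> l p (length par)"
proof -
  have "{0..Suc j} = insert (Suc j) (insert 0 {1..j})" by auto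
  moreover have "(\<Sum>i\<in>{1..j}. Zf \<alpha> l p j par i) = (\<Sum>m=1..j. (real m * (\<alpha> + 1) - 1) * real (B par m))"
    by (rule sum.cong) (auto simp: Zf_def)
  ultimately show ?thesis by (simp add: Zf_def)
qed

lemma Ctot_Suc: "Ctot \<alpha> l p (Suc N) = Ctot \<alpha> l p N + (1 + \<alpha>) + (if p dvd Suc N then l else 0)"
  unfolding Ctot_def by (simp add: div_Suc dvd_eq_mod_eq_0 algebra_simps)

lemma Zf_eqI:
  assumes "\<And>i. i \<le> j \<Longrightarrow> Zf \<alpha> l p j par i = Z' i"
    and "(\<Sum>i\<in>{0..Suc j}. Z' i) = Ctot \<alpha> l p (length par)"
    and "\<And>i. i > Suc j \<Longrightarrow> Z' i = 0"
  shows "Zf \<alpha> l p j par = Z'"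
proof
  fix i
  have eqs: "(\<Sum>i\<in>{0..Suc j}. Z' i) = (\<Sum>i\<in>{0..Suc j}. Zf \<alpha> l p j par i)"
    using assms(2) Zf_sum by simp
  have "{0..Suc j} = insert (Suc j) {0..j}" by auto
  then have "Z' (Suc j) + (\<Sum>i\<in>{0..j}. Z' i) = Zf \<alpha> l p j par (Suc j) + (\<Sum>i\<in>{0..j}. Zf \<alpha> l p j par i)"
    using eqs by simp
  moreover have "(\<Sum>i\<in>{0..j}. Z' i) = (\<Sum>i\<in>{0..j}. Zf \<alpha> l p j par i)"
    using assms(1) by simp
  ultimately have "Z' (Suc j) = Zf \<alpha> l p j par (Suc j)" by simp
  then show "Zf \<alpha> l p j par i = Z' i"
    using assms(1,3)[of i] by (cases "i \<le> j"; cases "i = Suc j") (auto simp: Zf_def)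
qed



lemma cls_zero_iff: "cls j par v = 0 \<longleftrightarrow> v = Root0"
proof (cases v)
  case (Ord k)
  then show ?thesis using cls_Ord_pos[of j par k] by simp
qed (auto simp: cls_def)

lemma Zf_step_comp:
  assumes "valid p par" "v \<in> set (cands p (length par))" "1 \<le> j" "i \<le> j"
  shows "Zf \<alpha> l p j (par @ [v]) i = Zf \<alpha> l p j par i + dlt \<alpha> j (cls j par v) i"
proof (cases "i = 0")
  case True
  have "cls j par v \<le> Suc j" by (rule cls_le)
  then have "dlt \<alpha> j (cls j par v) 0 = (if v = Root0 then 1 else 0)"
    using cls_zero_iff[of j par v] by (auto simp: dlt_def)
  then show ?thesis using True by (simp add: Zf_def outdeg_append)
next
  case False
  then have i: "1 \<le> i" "i \<le> j" "i \<noteq> 0" using assms(4) by auto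
  have Zi: "Zf \<alpha> l p j q i = (real i * (\<alpha> + 1) - 1) * real (B q i)" for q
    using i by (simp add: Zf_def)
  show ?thesis
  proof (cases v)
    case Root0
    then have "cls j par v = 0" by (simp add: cls_def)
    then show ?thesis unfolding Zi using Root0 B_append_root[OF assms(1), of i] i
      by (auto simp: dlt_def algebra_simps)
  next
    case (Imm x)
    then have c: "cls j par v = Suc j" by (simp add: cls_def)
    have "B (par @ [v]) i = B par i"
      using Imm by (intro B_append_same[OF assms(1)]) (auto simp: anc_def)
    then show ?thesis unfolding Zi c using i by (simp add: dlt_def)
  next
    case (Ord k)
    show ?thesis
    proof (cases "\<exists>c\<in>rcs par. (k, c) \<in> (parent_rel par)\<^sup>*")
      case True
      then obtain c0 where c0: "c0 \<in> rcs par" "(k, c0) \<in> (parent_rel par)\<^sup>*" by blast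
      have an: "anc par v c0" using c0 Ord by (simp add: anc_def)
      have cl: "cls j par v = (if subtree_size par c0 \<le> j then subtree_size par c0 else Suc j)"
        using cls_Ord_in[OF c0, of j] Ord by simp
      have Bs: "real (B (par @ [v]) i) = real (B par i) - (if subtree_size par c0 = i then 1 else 0)
            + (if Suc (subtree_size par c0) = i then 1 else 0)"
        by (rule B_append_shift[OF assms(1) c0(1) an])
      have pos: "subtree_size par c0 \<ge> 1" by (rule size_pos[OF c0(1)])
      show ?thesis
      proof (cases "subtree_size par c0 \<le> j")
        case True
        then show ?thesis unfolding Zi cl Bs using pos i
          by (auto simp: dlt_def algebra_simps)
      next
        case False
        then show ?thesis unfolding Zi cl Bs using i by (auto simp: dlt_def)
      qed
    next
      case False
      then have c: "cls j par v = Suc j" using Ord cls_Ord_none by blast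
      have "B (par @ [v]) i = B par i"
        using Ord False by (intro B_append_same[OF assms(1)]) (auto simp: anc_def)
      then show ?thesis unfolding Zi c using i by (simp add: dlt_def)
    qed
  qed
qed

lemma Zf_step:
  assumes "valid p par" "v \<in> set (cands p (length par))" "1 \<le> j"
  shows "Zf \<alpha> l p j (par @ [v]) = urn_update \<alpha> l p j (length par) (Zf \<alpha> l p j par) (cls j par v)"
proof (rule Zf_eqI)
  have cle: "cls j par v \<le> Suc j" by (rule cls_le)
  note U = urn_update_eq[OF cle assms(3)]
  show "Zf \<alpha> l p j (par @ [v]) i = urn_update \<alpha> l p j (length par) (Zf \<alpha> l p j par) (cls j par v) i"
    if "i \<le> j" for i
    using that Zf_step_comp[OF assms that] U by simp
  have "(\<Sum>i\<in>{0..Suc j}. urn_update \<alpha> l p j (length par) (Zf \<alpha> l p j par) (cls j par v) i)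
      = (\<Sum>i\<in>{0..Suc j}. Zf \<alpha> l p j par i) + (\<Sum>i\<in>{0..Suc j}. dlt \<alpha> j (cls j par v) i)
        + (\<Sum>i\<in>{0..Suc j}. (if i = Suc j \<and> p dvd Suc (length par) then l else 0))"
    unfolding U by (simp add: sum.distrib)
  also have "\<dots> = Ctot \<alpha> l p (length par) + (1 + \<alpha>) + (if p dvd Suc (length par) then l else 0)"
    using sum_dlt[OF cle assms(3)] Zf_sum by simp
  also have "\<dots> = Ctot \<alpha> l p (length (par @ [v]))" by (simp add: Ctot_Suc)
  finally show "(\<Sum>i\<in>{0..Suc j}. urn_update \<alpha> l p j (length par) (Zf \<alpha> l p j par) (cls j par v) i)
      = Ctot \<alpha> l p (length (par @ [v]))" .
  show "urn_update \<alpha> l p j (length par) (Zf \<alpha> l p j par) (cls j par v) i = 0" if "i > Suc j" for i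
    using that cle unfolding U by (auto simp: Zf_def dlt_def)
qed



lemma sum_cond_single: "(\<Sum>v | v = i \<and> P v. f v) = (if P i then f i else (0::real))"
proof -
  have "{v. v = i \<and> P v} = (if P i then {i} else {})" by auto
  then show ?thesis by simp
qed

lemma wn_nonneg: "\<alpha> > 0 \<Longrightarrow> l > 0 \<Longrightarrow> wn \<alpha> l par v \<ge> 0"
  by (cases v) (auto simp: wn_def outdeg_def)

lemma Ctot_pos: "\<alpha> > 0 \<Longrightarrow> l > 0 \<Longrightarrow> Ctot \<alpha> l p N > 0"
  unfolding Ctot_def by (intro add_nonneg_pos mult_nonneg_nonneg mult_pos_pos) auto

lemma tree_step_alt:
  "tree_step \<alpha> l p par = map_pmf (\<lambda>v. par @ [v])
     (pmf_of_list (map (\<lambda>v. (v, wn \<alpha> l par v / Ctot \<alpha> l p (length par))) (cands p (length par))))"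
proof -
  have "(\<lambda>v. (case v of Ord _ \<Rightarrow> outdeg par v + \<alpha> | _ \<Rightarrow> outdeg par v + l) / Ctot \<alpha> l p (length par))
      = (\<lambda>v. wn \<alpha> l par v / Ctot \<alpha> l p (length par))"
    by (rule ext, case_tac v) (auto simp: wn_def)
  show ?thesis unfolding tree_step_def Let_def Ctot_def[symmetric] cands_def[symmetric]
    by (intro arg_cong[where f="map_pmf (\<lambda>v. par @ [v])"] arg_cong[where f=pmf_of_list] map_cong refl)
       (auto simp: wn_def split: node.splits)
qed

lemma wf_tree:
  assumes "valid p par" "\<alpha> > 0" "l > 0"
  shows "pmf_of_list_wf (map (\<lambda>v. (v, wn \<alpha> l par v / Ctot \<alpha> l p (length par))) (cands p (length par)))"
proof (rule pmf_of_list_wfI)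
  show "x \<ge> 0" if "x \<in> set (map snd (map (\<lambda>v. (v, wn \<alpha> l par v / Ctot \<alpha> l p (length par))) (cands p (length par))))" for x
    using that wn_nonneg[OF assms(2,3)] Ctot_pos[OF assms(2,3)] by (auto intro!: divide_nonneg_pos)
  have "sum_list (map snd (map (\<lambda>v. (v, wn \<alpha> l par v / Ctot \<alpha> l p (length par))) (cands p (length par))))
      = (\<Sum>v\<in>set (cands p (length par)). wn \<alpha> l par v / Ctot \<alpha> l p (length par))"
    by (simp add: o_def sum_list_distinct_conv_sum_set distinct_cands)
  also have "\<dots> = 1"
  proof -
    have cp: "Ctot \<alpha> l p (length par) > 0" by (rule Ctot_pos[OF assms(2,3)])
    then show ?thesis using total_weight[OF assms(1), of \<alpha> l]
      by (simp add: sum_divide_distrib[symmetric])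
  qed
  finally show "sum_list (map snd (map (\<lambda>v. (v, wn \<alpha> l par v / Ctot \<alpha> l p (length par))) (cands p (length par)))) = 1" .
qed

lemma Zf_nonneg:
  assumes "valid p par" "\<alpha> > 0" "l > 0" "i \<le> Suc j"
  shows "Zf \<alpha> l p j par i \<ge> 0"
  unfolding class_weight[OF assms(1,4), symmetric] using wn_nonneg[OF assms(2,3)] by (intro sum_nonneg) auto

lemma step_comm:
  assumes "valid p par" "\<alpha> > 0" "l > 0" "1 \<le> j"
  shows "map_pmf (\<lambda>q. (length q, Zf \<alpha> l p j q)) (tree_step \<alpha> l p par)
       = urn_step \<alpha> l p j (length par, Zf \<alpha> l p j par)"
proof -
  let ?C = "Ctot \<alpha> l p (length par)"
  let ?P = "pmf_of_list (map (\<lambda>v. (v, wn \<alpha> l par v / ?C)) (cands p (length par)))"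
  let ?Z = "Zf \<alpha> l p j par"
  let ?U = "\<lambda>i. (Suc (length par), urn_update \<alpha> l p j (length par) ?Z i)"
  have wf: "pmf_of_list_wf (map (\<lambda>v. (v, wn \<alpha> l par v / ?C)) (cands p (length par)))"
    by (rule wf_tree[OF assms(1-3)])
  have Cpos: "?C > 0" by (rule Ctot_pos[OF assms(2,3)])
  have "map_pmf (\<lambda>q. (length q, Zf \<alpha> l p j q)) (tree_step \<alpha> l p par)
      = map_pmf (\<lambda>v. (length (par @ [v]), Zf \<alpha> l p j (par @ [v]))) ?P"
    unfolding tree_step_alt by (simp add: pmf.map_comp o_def)
  also have "\<dots> = map_pmf (\<lambda>v. ?U (cls j par v)) ?P"
  proof (rule map_pmf_cong[OF refl])
    fix v assume "v \<in> set_pmf ?P"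
    then have "v \<in> set (cands p (length par))" using set_pmf_of_list[OF wf] by auto
    then show "(length (par @ [v]), Zf \<alpha> l p j (par @ [v])) = ?U (cls j par v)"
      using Zf_step[OF assms(1) _ assms(4)] by simp
  qed
  also have "\<dots> = map_pmf ?U (map_pmf (cls j par) ?P)" by (simp add: pmf.map_comp o_def)
  also have "map_pmf (cls j par) ?P = pmf_of_list (map (\<lambda>i. (i, ?Z i / (\<Sum>i'\<in>{0..j + 1}. ?Z i'))) [0..<j + 2])"
  proof (rule pmf_eqI)
    fix i
    have sumZ: "(\<Sum>i'\<in>{0..j + 1}. ?Z i') = ?C" using Zf_sum by simp
    have wf2: "pmf_of_list_wf (map (\<lambda>i. (i, ?Z i / ?C)) [0..<j + 2])"
    proof (rule pmf_of_list_wfI)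
      show "x \<ge> 0" if "x \<in> set (map snd (map (\<lambda>i. (i, ?Z i / ?C)) [0..<j + 2]))" for x
        using that Zf_nonneg[OF assms(1-3)] Cpos by auto
      have st: "set [0..<j + 2] = {0..Suc j}" by auto
      have "sum_list (map snd (map (\<lambda>i. (i, ?Z i / ?C)) [0..<j + 2])) = (\<Sum>i\<in>set [0..<j + 2]. ?Z i / ?C)"
        by (simp add: o_def sum_list_distinct_conv_sum_set del: upt_Suc)
      also have "\<dots> = (\<Sum>i\<in>{0..Suc j}. ?Z i / ?C)" unfolding st ..
      also have "\<dots> = 1" using Zf_sum Cpos by (simp add: sum_divide_distrib[symmetric])
      finally show "sum_list (map snd (map (\<lambda>i. (i, ?Z i / ?C)) [0..<j + 2])) = 1" .
    qed
    have R: "pmf (pmf_of_list (map (\<lambda>i. (i, ?Z i / ?C)) [0..<j + 2])) i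
        = (if i \<le> Suc j then ?Z i / ?C else 0)"
    proof -
      have R0: "pmf (map_pmf id (pmf_of_list (map (\<lambda>i. (i, ?Z i / ?C)) [0..<j + 2]))) i
          = (\<Sum>v\<in>{v\<in>set [0..<j + 2]. id v = i}. ?Z v / ?C)"
        by (rule pmf_map_pmf_of_list[OF distinct_upt wf2])
      have setq: "{v\<in>set [0..<j + 2]. id v = i} = (if i \<le> Suc j then {i} else {})"
        by (auto simp del: upt_Suc)
      show ?thesis using R0 unfolding pmf.map_id id_apply by (simp add: sum_cond_single)
    qed
    have L: "pmf (map_pmf (cls j par) ?P) i = (if i \<le> Suc j then ?Z i / ?C else 0)"
    proof -
      have "pmf (map_pmf (cls j par) ?P) i = (\<Sum>v\<in>{v\<in>set (cands p (length par)). cls j par v = i}. wn \<alpha> l par v / ?C)"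
        by (rule pmf_map_pmf_of_list[OF distinct_cands wf])
      also have "\<dots> = (\<Sum>v\<in>{v\<in>set (cands p (length par)). cls j par v = i}. wn \<alpha> l par v) / ?C"
        by (simp add: sum_divide_distrib)
      also have "\<dots> = (if i \<le> Suc j then ?Z i / ?C else 0)"
      proof (cases "i \<le> Suc j")
        case True
        then show ?thesis using class_weight[OF assms(1) True] by simp
      next
        case False
        then have e: "{v\<in>set (cands p (length par)). cls j par v = i} = {}"
          using cls_le[of j par] by (fastforce simp: not_le)
        then show ?thesis using False unfolding e by simp
      qed
      finally show ?thesis .
    qed
    show "pmf (map_pmf (cls j par) ?P) i = pmf (pmf_of_list (map (\<lambda>i. (i, ?Z i / (\<Sum>i'\<in>{0..j + 1}. ?Z i'))) [0..<j + 2])) i"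
      unfolding sumZ L R ..
  qed
  finally show ?thesis unfolding urn_step_def by simp
qed

lemma Zf_init: "(0, Zf \<alpha> l p j []) = urn_init l"
proof -
  have "Zf \<alpha> l p j [] = (\<lambda>_. 0)(0 := l)"
    by (rule ext) (simp add: Zf_def outdeg_def B_def Ctot_def)
  then show ?thesis by (simp add: urn_init_def)
qed

lemma B_vec_Zf:
  assumes "\<alpha> > 0"
  shows "B_vec j par = Z_vec \<alpha> j (length par, Zf \<alpha> l p j par)"
proof -
  have "real (B par m) = Zf \<alpha> l p j par m / (real m * (\<alpha> + 1) - 1)" if "m \<in> set [1..<j + 1]" for m
  proof -
    have m: "1 \<le> m" "m \<le> j" using that by auto
    have e: "real m * (\<alpha> + 1) - 1 = (real m - 1) * (\<alpha> + 1) + \<alpha>" by (simp add: algebra_simps)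
    have "(real m - 1) * (\<alpha> + 1) \<ge> 0" using m assms by simp
    then have "real m * (\<alpha> + 1) - 1 \<ge> \<alpha>" unfolding e by linarith
    then have "real m * (\<alpha> + 1) - 1 > 0" using assms by linarith
    then show ?thesis using m by (simp add: Zf_def)
  qed
  then show ?thesis unfolding B_vec_def Z_vec_def by simp
qed

theorem mainTheorem12:
  fixes j p :: nat and \<alpha> l :: real
  assumes "j \<ge> 1" and "\<alpha> > 0" and "l > 0" and "p \<ge> 1"
  shows "\<forall>n. map_pmf (map (B_vec j)) (traj_law (tree_step \<alpha> l p) [] n)
            = map_pmf (map (Z_vec \<alpha> j)) (traj_law (urn_step \<alpha> l p j) (urn_init l) n)"
proof
  fix n
  let ?f = "\<lambda>q. (length q, Zf \<alpha> l p j q)"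
  have lump: "map_pmf (map ?f) (traj_law (tree_step \<alpha> l p) [] n) = traj_law (urn_step \<alpha> l p j) (?f []) n"
  proof (rule conjunct1[OF traj_lump[where P="valid p"]])
    show "valid p []" by (simp add: valid_def)
    show "valid p t" if a: "valid p s" and b: "t \<in> set_pmf (tree_step \<alpha> l p s)" for s t
    proof -
      obtain v where v: "t = s @ [v]" "v \<in> set_pmf (pmf_of_list (map (\<lambda>v. (v, wn \<alpha> l s v / Ctot \<alpha> l p (length s))) (cands p (length s))))"
        using b unfolding tree_step_alt by auto
      then have "v \<in> set (cands p (length s))"
        using set_pmf_of_list[OF wf_tree[OF a assms(2,3)]] by auto
      then show ?thesis using v(1) valid_append[OF a] by simp
    qed
    show "map_pmf ?f (tree_step \<alpha> l p s) = urn_step \<alpha> l p j (?f s)" if "valid p s" for s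
      using step_comm[OF that assms(2,3,1)] by simp
  qed
  have "map_pmf (map (B_vec j)) (traj_law (tree_step \<alpha> l p) [] n)
      = map_pmf (map (Z_vec \<alpha> j) \<circ> map ?f) (traj_law (tree_step \<alpha> l p) [] n)"
    using B_vec_Zf[OF assms(2)] by (simp add: o_def)
  also have "\<dots> = map_pmf (map (Z_vec \<alpha> j)) (map_pmf (map ?f) (traj_law (tree_step \<alpha> l p) [] n))"
    by (simp add: pmf.map_comp)
  also have "\<dots> = map_pmf (map (Z_vec \<alpha> j)) (traj_law (urn_step \<alpha> l p j) (urn_init l) n)"
    unfolding lump by (simp add: Zf_init)
  finally show "map_pmf (map (B_vec j)) (traj_law (tree_step \<alpha> l p) [] n)
            = map_pmf (map (Z_vec \<alpha> j)) (traj_law (urn_step \<alpha> l p j) (urn_init l) n)" .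
qed

end
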